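(* Let $H=\langle a,b \mid c=[b,a],\ [c,a]=[c,b]=1\rangle$. Then $PJ(H)=J_0(H)$.
   Context: $[x,y]=x^{-1}y^{-1}xy$; $H\cong UT(3,\mathbb{Z})$ and each element is uniquely $a^mb^nc^k$, $m,n,k\in\mathbb{Z}$. $PJ(H)$ is the space of functions $f\colon H\to\mathbb{R}$ such that for some $\delta>0$, $|f(xy)+f(xy^{-1})-2f(x)|\le\delta$ for all $x,y\in H$, and $f(x^n)=nf(x)$ for all $x\in H$, $n\in\mathbb{Z}$. $J_0(H)$ is the space of $f\colon H\to\mathbb{R}$ with $f(xy)+f(xy^{-1})=2f(x)$ for all $x,y$ and $f(1)=0$. *)

theory Defs
  imports Complex_Main "HOL-Algebra.Group"
begin

text \<open>Concrete model of H = <a,b | c=[b,a], [c,a]=[c,b]=1>, with [x,y] = x^-1 y^-1 x y.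
  The element a^m b^n c^k is represented by the triple (m,n,k).  Since b a = a b c
  and c is central, (a^m b^n c^k)(a^m' b^n' c^k') = a^(m+m') b^(n+n') c^(k+k'+n m').\<close>

fun heis_mult :: "int \<times> int \<times> int \<Rightarrow> int \<times> int \<times> int \<Rightarrow> int \<times> int \<times> int" where
  "heis_mult (m, n, k) (m', n', k') = (m + m', n + n', k + k' + n * m')"

definition Heis :: "(int \<times> int \<times> int) monoid" where
  "Heis = \<lparr>carrier = UNIV, mult = heis_mult, one = (0, 0, 0)\<rparr>"

definition gen_a :: "int \<times> int \<times> int" where "gen_a = (1, 0, 0)"
definition gen_b :: "int \<times> int \<times> int" where "gen_b = (0, 1, 0)"
definition gen_c :: "int \<times> int \<times> int" where "gen_c = (0, 0, 1)"

lemma group_Heis: "group Heis"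
proof (rule groupI)
  show "\<And>x y z. x \<in> carrier Heis \<Longrightarrow> y \<in> carrier Heis \<Longrightarrow> z \<in> carrier Heis \<Longrightarrow>
      x \<otimes>\<^bsub>Heis\<^esub> y \<otimes>\<^bsub>Heis\<^esub> z = x \<otimes>\<^bsub>Heis\<^esub> (y \<otimes>\<^bsub>Heis\<^esub> z)"
    by (auto simp: Heis_def algebra_simps)
  show "\<And>x. x \<in> carrier Heis \<Longrightarrow> \<exists>y\<in>carrier Heis. y \<otimes>\<^bsub>Heis\<^esub> x = \<one>\<^bsub>Heis\<^esub>"
  proof -
    fix x :: "int \<times> int \<times> int"
    obtain m n k where "x = (m, n, k)" by (cases x) auto
    then show "\<exists>y\<in>carrier Heis. y \<otimes>\<^bsub>Heis\<^esub> x = \<one>\<^bsub>Heis\<^esub>"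
      by (intro bexI[of _ "(-m, -n, -k + n*m)"]) (auto simp: Heis_def)
  qed
qed (auto simp: Heis_def)

lemma "gen_c = inv\<^bsub>Heis\<^esub> gen_b \<otimes>\<^bsub>Heis\<^esub> inv\<^bsub>Heis\<^esub> gen_a \<otimes>\<^bsub>Heis\<^esub> gen_b \<otimes>\<^bsub>Heis\<^esub> gen_a"
proof -
  interpret group Heis by (rule group_Heis)
  have ib: "inv\<^bsub>Heis\<^esub> gen_b = (0, -1, 0)"
    by (rule inv_equality) (auto simp: Heis_def gen_b_def)
  have ia: "inv\<^bsub>Heis\<^esub> gen_a = (-1, 0, 0)"
    by (rule inv_equality) (auto simp: Heis_def gen_a_def)
  show ?thesis by (simp add: ia ib, simp add: Heis_def gen_a_def gen_b_def gen_c_def)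
qed

definition PJ :: "(int \<times> int \<times> int \<Rightarrow> real) set" where
  "PJ = {f. (\<exists>\<delta>>0. \<forall>x y.
              \<bar>f (x \<otimes>\<^bsub>Heis\<^esub> y) + f (x \<otimes>\<^bsub>Heis\<^esub> inv\<^bsub>Heis\<^esub> y) - 2 * f x\<bar> \<le> \<delta>)
           \<and> (\<forall>x (n::int). f (x [^]\<^bsub>Heis\<^esub> n) = real_of_int n * f x)}"

definition J0 :: "(int \<times> int \<times> int \<Rightarrow> real) set" where
  "J0 = {f. (\<forall>x y. f (x \<otimes>\<^bsub>Heis\<^esub> y) + f (x \<otimes>\<^bsub>Heis\<^esub> inv\<^bsub>Heis\<^esub> y) = 2 * f x)
           \<and> f \<one>\<^bsub>Heis\<^esub> = 0}"

end

theory Submission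
  imports Defs
begin


definition tri :: "int \<Rightarrow> int" where "tri N = N*(N-1) div 2"

lemma tri2: "2 * tri N = N*(N-1)"
  unfolding tri_def by (simp add: dvd_mult_div_cancel)

lemma tri_suc: "tri (i+1) = tri i + i"
  using tri2[of "i+1"] tri2[of i] by (simp add: algebra_simps)

lemma tri_neg: "tri (-i) = tri i + i"
  using tri2[of "-i"] tri2[of i] by (simp add: algebra_simps)

definition pw :: "int \<times> int \<times> int \<Rightarrow> int \<Rightarrow> int \<times> int \<times> int" where
  "pw x N = (case x of (m,n,k) \<Rightarrow> (N*m, N*n, N*k + m*n*tri N))"

lemma mult_H: "x \<otimes>\<^bsub>Heis\<^esub> y = heis_mult x y" by (simp add: Heis_def)

lemma inv_H: "inv\<^bsub>Heis\<^esub> (m,n,k) = (-m,-n,-k+n*m)"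
proof -
  interpret group Heis by (rule group_Heis)
  show ?thesis by (rule inv_equality) (auto simp: Heis_def)
qed

lemma pow_nat_H: "(m,n,k) [^]\<^bsub>Heis\<^esub> (j::nat) = pw (m,n,k) (int j)"
proof (induction j)
  case 0 then show ?case by (simp add: pw_def Heis_def tri_def)
next
  case (Suc j)
  have "(m,n,k) [^]\<^bsub>Heis\<^esub> (Suc j) = (m,n,k) [^]\<^bsub>Heis\<^esub> j \<otimes>\<^bsub>Heis\<^esub> (m,n,k)" by simp
  also have "\<dots> = pw (m,n,k) (int (Suc j))" using Suc tri_suc[of "int j"]
    by (simp add: mult_H pw_def algebra_simps)
  finally show ?case .
qed

lemma pow_H: "(m,n,k) [^]\<^bsub>Heis\<^esub> (N::int) = pw (m,n,k) N"
proof (cases "N < 0")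
  case True
  then obtain j where j: "N = - int j" by (metis less_le neg_int_cases)
  interpret group Heis by (rule group_Heis)
  have "(m,n,k) [^]\<^bsub>Heis\<^esub> N = inv\<^bsub>Heis\<^esub> ((m,n,k) [^]\<^bsub>Heis\<^esub> j)"
    using j int_pow_neg_int by (simp add: Heis_def)
  also have "\<dots> = pw (m,n,k) N" unfolding pow_nat_H
    using tri_neg[of "int j"] tri2[of "int j"] by (simp add: pw_def inv_H j algebra_simps)
      (metis distrib_left mult.assoc)
  finally show ?thesis .
next
  case False
  then obtain j where "N = int j" by (metis nonneg_int_cases not_less)
  then show ?thesis by (simp add: int_pow_int pow_nat_H)
qed



lemma scale_zero:
  fixes r \<delta> :: real
  assumes "\<And>N::int. \<bar>real_of_int N * r\<bar> \<le> \<delta>"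
  shows "r = 0"
proof (rule ccontr)
  assume "r \<noteq> 0"
  then have "\<bar>r\<bar> > 0" by simp
  obtain N :: nat where "real N > \<delta> / \<bar>r\<bar>" using reals_Archimedean2 by blast
  then have "real N * \<bar>r\<bar> > \<delta>" using \<open>\<bar>r\<bar> > 0\<close> by (simp add: field_simps)
  moreover have "\<bar>real_of_int (int N) * r\<bar> = real N * \<bar>r\<bar>" by (simp add: abs_mult)
  ultimately show False using assms[of "int N"] by simp
qed

lemma kill:
  fixes g :: "int \<times> int \<times> int \<Rightarrow> real"
  assumes QJ: "\<And>m n k p q r. \<bar>g (heis_mult (m,n,k) (p,q,r)) + g (heis_mult (m,n,k) (-p,-q,-r+q*p)) - 2 * g (m,n,k)\<bar> \<le> \<delta>"
    and HOM: "\<And>x N. g (pw x N) = real_of_int N * g x"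
    and ga: "g (1,0,0) = 0" and gb: "g (0,1,0) = 0" and gc: "g (0,0,1) = 0"
  shows "g x = 0"
proof -
  have s1: "g (m,n,k) + g (m,n,-k) - 2 * g (m,n,0) = 0" for m n k
  proof (rule scale_zero)
    fix N :: int
    have e1: "heis_mult (pw (m,n,0) N) (0,0,N*k) = pw (m,n,k) N" by (simp add: pw_def)
    have p2: "pw (m,n,0) N = (N*m,N*n,m*n*tri N)" by (simp add: pw_def)
    have e2: "heis_mult (pw (m,n,0) N) (-0,-0,-(N*k)+0*0) = pw (m,n,-k) N" by (simp add: pw_def)
    have "\<bar>g (heis_mult (pw (m,n,0) N) (0,0,N*k)) + g (heis_mult (pw (m,n,0) N) (-0,-0,-(N*k)+0*0)) - 2 * g (pw (m,n,0) N)\<bar> \<le> \<delta>"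
      unfolding p2 by (rule QJ)
    then show "\<bar>real_of_int N * (g (m,n,k) + g (m,n,-k) - 2 * g (m,n,0))\<bar> \<le> \<delta>"
      unfolding e1 e2 HOM by (simp add: algebra_simps)
  qed
  have s2: "g (0,0,k) = 0" for k
    using HOM[of "(0,0,1)" k] gc by (simp add: pw_def)
  have s3: "g (m,n,k) + g (-m,-n,k+m*n) - 2 * g (0,0,k) = 0" for m n k
  proof (rule scale_zero)
    fix N :: int
    have e1: "heis_mult (pw (0,0,k) N) (pw (m,n,0) N) = pw (m,n,k) N" by (simp add: pw_def)
    have h: "m*n*(2*tri N) = m*n*(N*(N-1))" using tri2[of N] by simp
    have h3: "N*n*(N*m) = 2*(m*(n*tri N)) + N*(m*n)"
    proof -
      have "2*(m*(n*tri N)) = m*n*(2*tri N)" by simp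
      also have "\<dots> = m*n*(N*(N-1))" by (rule h)
      finally show ?thesis by (simp add: algebra_simps)
    qed
    have e2: "heis_mult (pw (0,0,k) N) (-(N*m),-(N*n),-(m*n*tri N)+(N*n)*(N*m)) = pw (-m,-n,k+m*n) N"
      using h3 by (simp add: pw_def distrib_left)
    have p1: "pw (0,0,k) N = (0,0,N*k)" and p2: "pw (m,n,0) N = (N*m,N*n,m*n*tri N)" by (simp_all add: pw_def)
    have "\<bar>g (heis_mult (pw (0,0,k) N) (pw (m,n,0) N)) + g (heis_mult (pw (0,0,k) N) (-(N*m),-(N*n),-(m*n*tri N)+(N*n)*(N*m))) - 2 * g (pw (0,0,k) N)\<bar> \<le> \<delta>"
      unfolding p1 p2 by (rule QJ)
    then show "\<bar>real_of_int N * (g (m,n,k) + g (-m,-n,k+m*n) - 2 * g (0,0,k))\<bar> \<le> \<delta>"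
      unfolding e1 e2 HOM by (simp add: algebra_simps)
  qed
  have s4: "g (-m,-n,k+m*n) = - g (m,n,-k)" for m n k
    using HOM[of "(m,n,-k)" "-1"] by (simp add: pw_def tri_def add.commute)
  have s5: "g (m,n,k) = g (m,n,0)" for m n k
    using s1[of m n k] s3[of m n k] s2[of k] s4[of m n k] by simp
  define G where "G u v = g (u,v,0)" for u v
  have G3: "g (m,n,k) = G m n" for m n k using s5 G_def by simp
  have GH: "G (N*m) (N*n) = real_of_int N * G m n" for N m n
    using HOM[of "(m,n,0)" N] by (simp add: pw_def G3)
  have GJ: "G (m+p) (n+q) + G (m-p) (n-q) - 2 * G m n = 0" for m n p q
  proof (rule scale_zero)
    fix N :: int
    have "\<bar>g (heis_mult (N*m,N*n,0) (N*p,N*q,0)) + g (heis_mult (N*m,N*n,0) (-(N*p),-(N*q),-0+(N*q)*(N*p))) - 2 * g (N*m,N*n,0)\<bar> \<le> \<delta>"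
      using QJ by blast
    then have "\<bar>G (N*(m+p)) (N*(n+q)) + G (N*(m-p)) (N*(n-q)) - 2 * G (N*m) (N*n)\<bar> \<le> \<delta>"
      by (simp add: G3 algebra_simps)
    then show "\<bar>real_of_int N * (G (m+p) (n+q) + G (m-p) (n-q) - 2 * G m n)\<bar> \<le> \<delta>"
      unfolding GH by (simp add: algebra_simps)
  qed
  have Gneg: "G (-m) (-n) = - G m n" for m n using GH[of "-1" m n] by simp
  have Gadd: "G (m+p) (n+q) = G m n + G p q" for m n p q
    using GJ[of m p n q] GJ[of p m q n] Gneg[of "m-p" "n-q"] by (simp add: algebra_simps)
  have G10: "G 1 0 = 0" using ga G_def by simp
  have G01: "G 0 1 = 0" using gb G_def by simp
  have "G m n = 0" for m n
    using Gadd[of m 0 0 n] GH[of m 1 0] GH[of n 0 1] G10 G01 by simp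
  then show ?thesis using G3 by (cases x) auto
qed



lemma J0_hom:
  assumes J: "\<And>x y. f (x \<otimes>\<^bsub>Heis\<^esub> y) + f (x \<otimes>\<^bsub>Heis\<^esub> inv\<^bsub>Heis\<^esub> y) = 2 * f x"
    and f1: "f \<one>\<^bsub>Heis\<^esub> = 0"
  shows "f (x [^]\<^bsub>Heis\<^esub> (N::int)) = real_of_int N * f x"
proof -
  interpret group Heis by (rule group_Heis)
  have C: "z \<in> carrier Heis" for z by (simp add: Heis_def)
  have odd: "f (inv\<^bsub>Heis\<^esub> z) = - f z" for z
    using J[of "\<one>\<^bsub>Heis\<^esub>" z] f1 C[of z] by simp
  have step: "f (x [^]\<^bsub>Heis\<^esub> (i+1)) = 2 * f (x [^]\<^bsub>Heis\<^esub> i) - f (x [^]\<^bsub>Heis\<^esub> (i-1))" for i :: int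
  proof -
    have "x [^]\<^bsub>Heis\<^esub> (i+1) = x [^]\<^bsub>Heis\<^esub> i \<otimes>\<^bsub>Heis\<^esub> x"
      using int_pow_mult[OF C[of x], of i 1] C[of x] by simp
    moreover have "x [^]\<^bsub>Heis\<^esub> (i-1) = x [^]\<^bsub>Heis\<^esub> i \<otimes>\<^bsub>Heis\<^esub> inv\<^bsub>Heis\<^esub> x"
      using int_pow_diff[OF C[of x], of i 1] C[of x] by simp
    ultimately show ?thesis using J[of "x [^]\<^bsub>Heis\<^esub> i" x] by simp
  qed
  have nat: "f (x [^]\<^bsub>Heis\<^esub> (int j)) = real j * f x \<and> f (x [^]\<^bsub>Heis\<^esub> (int j + 1)) = (real j + 1) * f x" for j
  proof (induction j)
    case 0 then show ?case using f1 C[of x] by simp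
  next
    case (Suc j)
    have "f (x [^]\<^bsub>Heis\<^esub> (int j + 1 + 1)) = 2 * f (x [^]\<^bsub>Heis\<^esub> (int j + 1)) - f (x [^]\<^bsub>Heis\<^esub> (int j + 1 - 1))"
      by (rule step)
    then show ?case using Suc by (simp add: algebra_simps)
  qed
  show ?thesis
  proof (cases "N < 0")
    case True
    then obtain j where j: "N = - int j" by (metis neg_int_cases)
    have "f (x [^]\<^bsub>Heis\<^esub> N) = f (inv\<^bsub>Heis\<^esub> (x [^]\<^bsub>Heis\<^esub> (int j)))"
      using j int_pow_neg[OF C[of x]] by simp
    then show ?thesis using odd nat[of j] j by simp
  next
    case False
    then obtain j where "N = int j" by (metis nonneg_int_cases not_less)
    then show ?thesis using nat[of j] by simp
  qed
qed

definition Lf :: "real \<Rightarrow> real \<Rightarrow> real \<Rightarrow> int \<times> int \<times> int \<Rightarrow> real" where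
  "Lf \<alpha> \<beta> \<gamma> x = (case x of (m,n,k) \<Rightarrow> of_int m * \<alpha> + of_int n * \<beta> + (of_int k - of_int m * of_int n / 2) * \<gamma>)"

lemma Lf_jensen: "Lf \<alpha> \<beta> \<gamma> (heis_mult (m,n,k) (p,q,r)) + Lf \<alpha> \<beta> \<gamma> (heis_mult (m,n,k) (-p,-q,-r+q*p)) = 2 * Lf \<alpha> \<beta> \<gamma> (m,n,k)"
  by (simp add: Lf_def field_simps)

lemma Lf_hom: "Lf \<alpha> \<beta> \<gamma> (pw x N) = real_of_int N * Lf \<alpha> \<beta> \<gamma> x"
proof -
  obtain m n k where x: "x = (m,n,k)" by (cases x) auto
  have t: "real_of_int (tri N) = real_of_int N * (real_of_int N - 1) / 2"
    using arg_cong[OF tri2[of N], of real_of_int] by simp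
  show ?thesis by (simp add: x pw_def Lf_def t field_simps)
qed



theorem lemma3p10:
  shows "PJ = J0"
proof
  show "J0 \<subseteq> PJ"
  proof
    fix f assume "f \<in> J0"
    then have J: "\<And>x y. f (x \<otimes>\<^bsub>Heis\<^esub> y) + f (x \<otimes>\<^bsub>Heis\<^esub> inv\<^bsub>Heis\<^esub> y) = 2 * f x"
      and f1: "f \<one>\<^bsub>Heis\<^esub> = 0" unfolding J0_def by auto
    have "\<forall>x y. \<bar>f (x \<otimes>\<^bsub>Heis\<^esub> y) + f (x \<otimes>\<^bsub>Heis\<^esub> inv\<^bsub>Heis\<^esub> y) - 2 * f x\<bar> \<le> 1"
      using J by simp
    then show "f \<in> PJ" unfolding PJ_def using J0_hom[OF J f1]
      by (auto intro!: exI[of _ 1])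
  qed
next
  show "PJ \<subseteq> J0"
  proof
    fix f assume "f \<in> PJ"
    then obtain \<delta> where QJ0: "\<And>x y. \<bar>f (x \<otimes>\<^bsub>Heis\<^esub> y) + f (x \<otimes>\<^bsub>Heis\<^esub> inv\<^bsub>Heis\<^esub> y) - 2 * f x\<bar> \<le> \<delta>"
      and H0: "\<And>x (N::int). f (x [^]\<^bsub>Heis\<^esub> N) = real_of_int N * f x"
      unfolding PJ_def by blast
    define \<alpha> where "\<alpha> = f (1,0,0)"
    define \<beta> where "\<beta> = f (0,1,0)"
    define \<gamma> where "\<gamma> = f (0,0,1)"
    define L where "L = Lf \<alpha> \<beta> \<gamma>"
    define g where "g x = f x - L x" for x
    have QJ: "\<bar>g (heis_mult (m,n,k) (p,q,r)) + g (heis_mult (m,n,k) (-p,-q,-r+q*p)) - 2 * g (m,n,k)\<bar> \<le> \<delta>" for m n k p q r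
    proof -
      have "\<bar>f (heis_mult (m,n,k) (p,q,r)) + f (heis_mult (m,n,k) (-p,-q,-r+q*p)) - 2 * f (m,n,k)\<bar> \<le> \<delta>"
        using QJ0[of "(m,n,k)" "(p,q,r)"] by (simp add: mult_H inv_H)
      then show ?thesis unfolding g_def L_def using Lf_jensen[of \<alpha> \<beta> \<gamma> m n k p q r]
        by (simp add: algebra_simps)
    qed
    have HOM: "g (pw x N) = real_of_int N * g x" for x N
    proof -
      obtain m n k where x: "x = (m,n,k)" by (cases x) auto
      have "f (pw x N) = real_of_int N * f x" using H0[of x N] pow_H x by simp
      then show ?thesis unfolding g_def L_def Lf_hom by (simp add: algebra_simps)
    qed
    have "g x = 0" for x
      by (rule kill[OF QJ HOM]) (simp_all add: g_def L_def Lf_def \<alpha>_def \<beta>_def \<gamma>_def)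
    then have fL: "f x = L x" for x unfolding g_def by simp
    show "f \<in> J0" unfolding J0_def
    proof (intro CollectI conjI allI)
      fix x y :: "int \<times> int \<times> int"
      obtain m n k where x: "x = (m,n,k)" by (cases x) auto
      obtain p q r where y: "y = (p,q,r)" by (cases y) auto
      show "f (x \<otimes>\<^bsub>Heis\<^esub> y) + f (x \<otimes>\<^bsub>Heis\<^esub> inv\<^bsub>Heis\<^esub> y) = 2 * f x"
      proof -
        have e1: "x \<otimes>\<^bsub>Heis\<^esub> y = heis_mult (m,n,k) (p,q,r)" by (simp add: x y mult_H)
        have e2: "x \<otimes>\<^bsub>Heis\<^esub> inv\<^bsub>Heis\<^esub> y = heis_mult (m,n,k) (-p,-q,-r+q*p)"
          by (simp only: x y mult_H inv_H)
        show ?thesis unfolding e1 e2 unfolding x fL L_def by (rule Lf_jensen)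
      qed
    next
      show "f \<one>\<^bsub>Heis\<^esub> = 0" unfolding fL L_def by (simp add: Heis_def Lf_def)
    qed
  qed
qed

end
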